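(* Let $(X,C)$ be a convexity space (not necessarily separable or compact) and let $\varepsilon>0$. If the Radon number of $(X,C)$ is greater than $r>0$, then there is a probability distribution $\mu$ on $X$ such that every weak $\varepsilon$-net for $C$ over $\mu$ has size at least $(1-2\varepsilon)r$.
   Context: A convexity space is a pair $(X,C)$ with $C\subseteq 2^X$ such that $\emptyset, X\in C$ and $C$ is closed under arbitrary intersections. The convex hull $conv(Y)$ is the intersection of all $c\in C$ containing $Y$. $C$ Radon-shatters $Y\subseteq X$ if for every partition $Y=Y_1\sqcup Y_2$, $conv(Y_1)\cap conv(Y_2)=\emptyset$; the Radon number is the minimum $r$ such that no set of size $r$ is Radon-shattered. A weak $\varepsilon$-net for $C$ over $\mu$ is a set $S\subseteq X$ meeting every $c\in C$ with $\mu(c)\ge\varepsilon$. *)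

theory Defs
  imports "HOL-Probability.Probability"
begin

definition convexity_space :: "'a set \<Rightarrow> 'a set set \<Rightarrow> bool" where
  "convexity_space X C \<longleftrightarrow> C \<subseteq> Pow X \<and> {} \<in> C \<and> X \<in> C \<and>
     (\<forall>D. D \<subseteq> C \<and> D \<noteq> {} \<longrightarrow> \<Inter>D \<in> C)"

definition conv_hull :: "'a set set \<Rightarrow> 'a set \<Rightarrow> 'a set" where
  "conv_hull C Y = \<Inter>{c \<in> C. Y \<subseteq> c}"

definition radon_shatters :: "'a set set \<Rightarrow> 'a set \<Rightarrow> bool" where
  "radon_shatters C Y \<longleftrightarrow>
     (\<forall>Y1 Y2. Y1 \<union> Y2 = Y \<and> Y1 \<inter> Y2 = {} \<longrightarrow> conv_hull C Y1 \<inter> conv_hull C Y2 = {})"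

definition radon_number :: "'a set \<Rightarrow> 'a set set \<Rightarrow> enat" where
  "radon_number X C = Inf {enat r | r. \<not> (\<exists>Y. Y \<subseteq> X \<and> finite Y \<and> card Y = r \<and> radon_shatters C Y)}"

definition weak_eps_net :: "'a set set \<Rightarrow> 'a measure \<Rightarrow> real \<Rightarrow> 'a set \<Rightarrow> bool" where
  "weak_eps_net C M \<epsilon> S \<longleftrightarrow> (\<forall>c\<in>C. measure M c \<ge> \<epsilon> \<longrightarrow> S \<inter> c \<noteq> {})"

end

theory Submission
  imports Defs
begin

lemma ranked_parity:
  fixes h :: "'a \<Rightarrow> 'b::linorder"
  assumes "finite L" "L \<noteq> {}" "inj_on h L"
  shows "odd (card {a\<in>L. \<forall>b\<in>L. (h a < h b \<longrightarrow> G b) \<and> (h b < h a \<longrightarrow> \<not> G b)})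
         \<longleftrightarrow> (\<forall>b\<in>L. G b) \<or> (\<forall>b\<in>L. \<not> G b)"
  using assms
proof (induction L rule: finite_ranking_induct[where f = h])
  case empty
  then show ?case by blast
next
  case (insert x S)
  show ?case
  proof (cases "x \<in> S")
    case True
    have e: "insert x S = S" using True by blast
    show ?thesis using insert.IH insert.prems unfolding e by blast
  next
    case xS: False
    show ?thesis
    proof (cases "S = {}")
      case True
      have "{a\<in>insert x S. \<forall>b\<in>insert x S. (h a < h b \<longrightarrow> G b) \<and> (h b < h a \<longrightarrow> \<not> G b)} = {x}"
        using True by auto
      then show ?thesis using True by simp
    next
      case False
      have inj: "inj_on h S" using insert.prems by (auto simp: inj_on_def)
      have lt: "h y < h x" if "y \<in> S" for y
      proof -
        have "h y \<le> h x" using insert.hyps(2)[OF that] .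
        moreover have "h y \<noteq> h x"
          using insert.prems(2) that xS unfolding inj_on_def by blast
        ultimately show ?thesis by simp
      qed
      define D where "D = {a\<in>S. \<forall>b\<in>S. (h a < h b \<longrightarrow> G b) \<and> (h b < h a \<longrightarrow> \<not> G b)}"
      have IH: "odd (card D) \<longleftrightarrow> (\<forall>b\<in>S. G b) \<or> (\<forall>b\<in>S. \<not> G b)"
        using insert.IH[OF False inj] by (simp add: D_def)
      have eq: "{a\<in>insert x S. \<forall>b\<in>insert x S. (h a < h b \<longrightarrow> G b) \<and> (h b < h a \<longrightarrow> \<not> G b)}
          = (if G x then D else {}) \<union> (if \<forall>b\<in>S. \<not> G b then {x} else {})"
      proof (intro set_eqI iffI)
        fix a assume a: "a \<in> {a\<in>insert x S. \<forall>b\<in>insert x S. (h a < h b \<longrightarrow> G b) \<and> (h b < h a \<longrightarrow> \<not> G b)}"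
        show "a \<in> (if G x then D else {}) \<union> (if \<forall>b\<in>S. \<not> G b then {x} else {})"
        proof (cases "a = x")
          case True
          then show ?thesis using a lt by auto
        next
          case False
          then have "a \<in> S" "G x" using a lt by auto
          then show ?thesis using a by (auto simp: D_def)
        qed
      next
        fix a assume a: "a \<in> (if G x then D else {}) \<union> (if \<forall>b\<in>S. \<not> G b then {x} else {})"
        show "a \<in> {a\<in>insert x S. \<forall>b\<in>insert x S. (h a < h b \<longrightarrow> G b) \<and> (h b < h a \<longrightarrow> \<not> G b)}"
        proof (cases "a = x")
          case True
          then have "\<forall>b\<in>S. \<not> G b" using a xS by (auto simp: D_def split: if_splits)
          then show ?thesis using True lt by (auto dest: less_asym)
        next
          case False
          then have "a \<in> D" "G x" using a by (auto split: if_splits)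
          then show ?thesis using lt[of a] by (auto simp: D_def)
        qed
      qed
      have fD: "finite D" using insert.hyps(1) by (simp add: D_def)
      have xD: "x \<notin> D" using xS by (simp add: D_def)
      from False obtain y where y: "y \<in> S" by auto
      show ?thesis
      proof (cases "G x")
        case Gx: True
        show ?thesis
        proof (cases "\<forall>b\<in>S. \<not> G b")
          case True
          then have "\<not> (\<forall>b\<in>S. G b)" using y by blast
          then show ?thesis unfolding eq using IH fD xD Gx True y by auto
        next
          case False
          then show ?thesis unfolding eq using IH Gx by auto
        qed
      next
        case nGx: False
        then show ?thesis unfolding eq using y by auto
      qed
    qed
  qed
qed

definition cnt :: "int set \<Rightarrow> int \<Rightarrow> nat" where
  "cnt L l = card {l'\<in>L. \<bar>l\<bar> < \<bar>l'\<bar>}"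

definition altp :: "int set \<Rightarrow> bool" where
  "altp L \<longleftrightarrow> (\<forall>l\<in>L. (0 < l \<longleftrightarrow> even (cnt L l)))"

lemma cnt_remove:
  assumes "finite L" "l0 \<in> L" "b \<in> L" "b \<noteq> l0" "inj_on abs L"
  shows "cnt (L - {l0}) b = (if \<bar>b\<bar> < \<bar>l0\<bar> then cnt L b - 1 else cnt L b)"
proof -
  have "\<bar>b\<bar> \<noteq> \<bar>l0\<bar>" using assms(2-5) unfolding inj_on_def by blast
  have e: "{l'\<in>L - {l0}. \<bar>b\<bar> < \<bar>l'\<bar>} = {l'\<in>L. \<bar>b\<bar> < \<bar>l'\<bar>} - {l0}" by blast
  show ?thesis
  proof (cases "\<bar>b\<bar> < \<bar>l0\<bar>")
    case True
    then show ?thesis unfolding cnt_def e using assms(1,2) by (subst card_Diff_singleton) auto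
  next
    case False
    then have "{l'\<in>L. \<bar>b\<bar> < \<bar>l'\<bar>} - {l0} = {l'\<in>L. \<bar>b\<bar> < \<bar>l'\<bar>}" by auto
    then show ?thesis unfolding cnt_def e using False by simp
  qed
qed

lemma cnt_pos:
  assumes "finite L" "l0 \<in> L" "\<bar>b\<bar> < \<bar>l0\<bar>"
  shows "cnt L b \<ge> 1"
proof -
  have "l0 \<in> {l'\<in>L. \<bar>b\<bar> < \<bar>l'\<bar>}" using assms by auto
  then have "{l'\<in>L. \<bar>b\<bar> < \<bar>l'\<bar>} \<noteq> {}" by blast
  then show ?thesis unfolding cnt_def using assms(1)
    by (simp add: Suc_leI card_gt_0_iff)
qed

lemma altp_remove:
  assumes "finite L" "l0 \<in> L" "inj_on abs L"
  shows "altp (L - {l0}) \<longleftrightarrow>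
    (\<forall>b\<in>L. (\<bar>l0\<bar> < \<bar>b\<bar> \<longrightarrow> (0 < b \<longleftrightarrow> even (cnt L b))) \<and> (\<bar>b\<bar> < \<bar>l0\<bar> \<longrightarrow> \<not> (0 < b \<longleftrightarrow> even (cnt L b))))"
proof -
  have key: "(0 < b \<longleftrightarrow> even (cnt (L - {l0}) b)) \<longleftrightarrow>
      (if \<bar>b\<bar> < \<bar>l0\<bar> then \<not> (0 < b \<longleftrightarrow> even (cnt L b)) else (0 < b \<longleftrightarrow> even (cnt L b)))"
    if b: "b \<in> L" "b \<noteq> l0" for b
  proof (cases "\<bar>b\<bar> < \<bar>l0\<bar>")
    case True
    have "cnt L b \<ge> 1" using cnt_pos[OF assms(1,2) True] .
    then show ?thesis using cnt_remove[OF assms(1,2) b assms(3)] True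
      by (cases "cnt L b") auto
  next
    case False
    then show ?thesis using cnt_remove[OF assms(1,2) b assms(3)] by simp
  qed
  have ne: "\<bar>b\<bar> \<noteq> \<bar>l0\<bar>" if "b \<in> L" "b \<noteq> l0" for b
    using assms that unfolding inj_on_def by blast
  show ?thesis
    unfolding altp_def
  proof
    assume A: "\<forall>l\<in>L - {l0}. (0 < l) = even (cnt (L - {l0}) l)"
    show "\<forall>b\<in>L. (\<bar>l0\<bar> < \<bar>b\<bar> \<longrightarrow> (0 < b) = even (cnt L b)) \<and> (\<bar>b\<bar> < \<bar>l0\<bar> \<longrightarrow> (0 < b) \<noteq> even (cnt L b))"
    proof
      fix b assume b: "b \<in> L"
      show "(\<bar>l0\<bar> < \<bar>b\<bar> \<longrightarrow> (0 < b) = even (cnt L b)) \<and> (\<bar>b\<bar> < \<bar>l0\<bar> \<longrightarrow> (0 < b) \<noteq> even (cnt L b))"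
      proof (cases "b = l0")
        case True then show ?thesis by simp
      next
        case False
        then show ?thesis using A key[OF b False] b by (auto split: if_splits)
      qed
    qed
  next
    assume A: "\<forall>b\<in>L. (\<bar>l0\<bar> < \<bar>b\<bar> \<longrightarrow> (0 < b) = even (cnt L b)) \<and> (\<bar>b\<bar> < \<bar>l0\<bar> \<longrightarrow> (0 < b) \<noteq> even (cnt L b))"
    show "\<forall>l\<in>L - {l0}. (0 < l) = even (cnt (L - {l0}) l)"
    proof
      fix b assume b: "b \<in> L - {l0}"
      then have b1: "b \<in> L" "b \<noteq> l0" by auto
      have "\<bar>b\<bar> < \<bar>l0\<bar> \<or> \<bar>l0\<bar> < \<bar>b\<bar>" using ne[OF b1] by linarith
      then show "(0 < b) = even (cnt (L - {l0}) b)"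
        using A b1 key[OF b1] by (auto split: if_splits)
    qed
  qed
qed

lemma cnt_uminus:
  assumes "l \<in> L"
  shows "cnt (uminus ` L) (- l) = cnt L l"
proof -
  have "{l'\<in>uminus ` L. \<bar>- l\<bar> < \<bar>l'\<bar>} = uminus ` {l'\<in>L. \<bar>l\<bar> < \<bar>l'\<bar>}" by force
  then show ?thesis unfolding cnt_def by (simp add: card_image)
qed

lemma altp_uminus:
  assumes "0 \<notin> L"
  shows "altp (uminus ` L) \<longleftrightarrow> (\<forall>b\<in>L. \<not> (0 < b \<longleftrightarrow> even (cnt L b)))"
proof -
  have "(0 < - b \<longleftrightarrow> even (cnt (uminus ` L) (- b))) \<longleftrightarrow> \<not> (0 < b \<longleftrightarrow> even (cnt L b))" if "b \<in> L" for b
  proof -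
    have "b \<noteq> 0" using assms that by blast
    then have "0 < - b \<longleftrightarrow> \<not> 0 < b" by linarith
    then show ?thesis unfolding cnt_uminus[OF that] by metis
  qed
  then show ?thesis unfolding altp_def by auto
qed

lemma alt_parity:
  assumes "finite L" "L \<noteq> {}" "0 \<notin> L" "inj_on abs L"
  shows "odd (card {l\<in>L. altp (L - {l})}) \<longleftrightarrow> altp L \<or> altp (uminus ` L)"
proof -
  define G where "G b = (0 < b \<longleftrightarrow> even (cnt L b))" for b
  have e: "{l\<in>L. altp (L - {l})} = {a\<in>L. \<forall>b\<in>L. (\<bar>a\<bar> < \<bar>b\<bar> \<longrightarrow> G b) \<and> (\<bar>b\<bar> < \<bar>a\<bar> \<longrightarrow> \<not> G b)}"
    using altp_remove[OF assms(1) _ assms(4)] unfolding G_def by auto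
  show ?thesis unfolding e ranked_parity[OF assms(1,2,4)] altp_uminus[OF assms(3)]
    by (simp add: altp_def G_def)
qed

lemma altp_both:
  assumes "finite L" "L \<noteq> {}" "0 \<notin> L"
  shows "\<not> (altp L \<and> altp (uminus ` L))"
proof -
  obtain l where l: "l \<in> L" "\<forall>l'\<in>L. \<bar>l'\<bar> \<le> \<bar>l\<bar>"
  proof -
    define m where "m = Max (abs ` L)"
    have "m \<in> abs ` L" using assms(1,2) unfolding m_def by (intro Max_in) auto
    then obtain l where "l \<in> L" "\<bar>l\<bar> = m" by blast
    moreover have "\<bar>l'\<bar> \<le> m" if "l' \<in> L" for l' using assms(1) that unfolding m_def by (intro Max_ge) auto
    ultimately show ?thesis using that by metis
  qed
  have "cnt L l = 0" using l assms(1) unfolding cnt_def by (auto simp: not_less)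
  then show ?thesis using altp_uminus[OF assms(3)] l(1) assms(3) unfolding altp_def
    by (metis even_zero less_linear)
qed

lemma invol_even:
  assumes "finite S" "\<And>x. x \<in> S \<Longrightarrow> f x \<in> S" "\<And>x. x \<in> S \<Longrightarrow> f (f x) = x"
    "\<And>x. x \<in> S \<Longrightarrow> f x \<noteq> x"
  shows "even (card S)"
  using assms
proof (induction S rule: finite_psubset_induct)
  case (psubset A)
  show ?case
  proof (cases "A = {}")
    case True then show ?thesis by simp
  next
    case False
    then obtain x where x: "x \<in> A" by auto
    define B where "B = A - {x, f x}"
    have sub: "B \<subset> A" using x unfolding B_def by auto
    have IH: "even (card B)"
    proof (rule psubset.IH[OF sub])
      fix y assume y: "y \<in> B"
      then have yA: "y \<in> A" "y \<noteq> x" "y \<noteq> f x" unfolding B_def by auto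
      show "f y \<in> B" unfolding B_def using yA psubset.prems(1)[OF yA(1)] psubset.prems(2)
        by (metis Diff_iff empty_iff insert_iff x)
      show "f (f y) = y" using yA psubset.prems by auto
      show "f y \<noteq> y" using yA psubset.prems by auto
    qed
    have "card A = card B + 2"
    proof -
      have "{x, f x} \<subseteq> A" using x psubset.prems by auto
      moreover have "card {x, f x} = 2" using psubset.prems(3)[OF x] by auto
      ultimately show ?thesis unfolding B_def using psubset.hyps(1)
        by (metis add.commute card_Diff_subset card_mono finite_subset le_add_diff_inverse)
    qed
    then show ?thesis using IH by simp
  qed
qed

lemma odd_sum_card:
  fixes g :: "'a \<Rightarrow> nat"
  assumes "finite A"
  shows "odd (\<Sum>a\<in>A. g a) \<longleftrightarrow> odd (card {a\<in>A. odd (g a)})"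
  using assms
proof (induction A rule: finite_induct)
  case empty then show ?case by simp
next
  case (insert x F)
  have e: "{a\<in>insert x F. odd (g a)} = (if odd (g x) then insert x {a\<in>F. odd (g a)} else {a\<in>F. odd (g a)})"
    by auto
  have f: "finite {a\<in>F. odd (g a)}" using insert by simp
  have n: "x \<notin> {a\<in>F. odd (g a)}" using insert by simp
  show ?case
  proof (cases "odd (g x)")
    case True
    then show ?thesis unfolding e using insert f n by simp
  next
    case False
    then show ?thesis unfolding e using insert by simp
  qed
qed

definition valid :: "nat \<Rightarrow> (nat \<times> bool) set \<Rightarrow> bool" where
  "valid n x \<longleftrightarrow> x \<noteq> {} \<and> fst ` x \<subseteq> {..<n} \<and> (\<forall>i. \<not> ((i,True) \<in> x \<and> (i,False) \<in> x))"

definition negs :: "(nat \<times> bool) set \<Rightarrow> (nat \<times> bool) set" where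
  "negs x = (\<lambda>p. (fst p, \<not> snd p)) ` x"

definition negw :: "(nat \<times> bool) list \<Rightarrow> (nat \<times> bool) list" where
  "negw w = map (\<lambda>p. (fst p, \<not> snd p)) w"

definition Wk :: "nat \<Rightarrow> (nat \<times> bool) list set" where
  "Wk k = {w. length w = k \<and> distinct (map fst w) \<and> fst ` set w = {..<k}}"

definition pre :: "(nat \<times> bool) list \<Rightarrow> nat \<Rightarrow> (nat \<times> bool) set" where
  "pre w i = set (take i w)"

lemma finite_Wk: "finite (Wk k)"
proof -
  have "Wk k \<subseteq> {w. set w \<subseteq> {..<k} \<times> UNIV \<and> length w = k}"
    unfolding Wk_def by force
  moreover have "finite {w. set w \<subseteq> ({..<k} \<times> (UNIV::bool set)) \<and> length w = k}"
    by (intro finite_lists_length_eq) auto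
  ultimately show ?thesis by (rule finite_subset)
qed

lemma distinct_fst_eq:
  assumes "distinct (map fst w)" "(a,b) \<in> set w" "(a,b') \<in> set w"
  shows "b = b'"
proof -
  have "inj_on fst (set w)" using assms(1) by (simp add: distinct_map)
  then show ?thesis using assms(2,3) unfolding inj_on_def by force
qed

lemma valid_pre:
  assumes "w \<in> Wk k" "k \<le> n" "1 \<le> i" "i \<le> k"
  shows "valid n (pre w i)"
proof -
  have len: "length w = k" and d: "distinct (map fst w)" and f: "fst ` set w = {..<k}"
    using assms(1) unfolding Wk_def by auto
  have "take i w \<noteq> []" using assms(3,4) len by auto
  then have ne: "pre w i \<noteq> {}" unfolding pre_def by simp
  have sub: "pre w i \<subseteq> set w" unfolding pre_def by (rule set_take_subset)
  have "fst ` pre w i \<subseteq> fst ` set w" using sub by (rule image_mono)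
  then have "fst ` pre w i \<subseteq> {..<n}" using f assms(2) by auto
  moreover have "\<not> ((j,True) \<in> pre w i \<and> (j,False) \<in> pre w i)" for j
    using sub distinct_fst_eq[OF d, of j True False] by auto
  ultimately show ?thesis using ne unfolding valid_def by blast
qed

lemma pre_mono: "i \<le> j \<Longrightarrow> pre w i \<subseteq> pre w j"
  unfolding pre_def by (rule set_take_subset_set_take)

locale tuck =
  fixes n :: nat and M :: nat and lam :: "(nat \<times> bool) set \<Rightarrow> int"
  assumes antip: "\<And>x. valid n x \<Longrightarrow> lam (negs x) = - lam x"
    and nz: "\<And>x. valid n x \<Longrightarrow> lam x \<noteq> 0"
    and bnd: "\<And>x. valid n x \<Longrightarrow> \<bar>lam x\<bar> \<le> int M"
    and nocomp: "\<And>x y. valid n x \<Longrightarrow> valid n y \<Longrightarrow> x \<subseteq> y \<Longrightarrow> lam x \<noteq> - lam y"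
begin

definition g :: "(nat \<times> bool) list \<Rightarrow> nat \<Rightarrow> int" where
  "g w i = lam (pre w i)"

definition lab :: "(nat \<times> bool) list \<Rightarrow> int set" where
  "lab w = g w ` {1..length w}"

definition door :: "(nat \<times> bool) list \<Rightarrow> nat \<Rightarrow> bool" where
  "door w j \<longleftrightarrow> card (g w ` ({1..length w} - {j})) = length w - 1 \<and> altp (g w ` ({1..length w} - {j}))"

lemma lab_props:
  assumes "w \<in> Wk k" "k \<le> n"
  shows "finite (lab w)" "0 \<notin> lab w" "inj_on abs (lab w)"
proof -
  have len: "length w = k" using assms unfolding Wk_def by auto
  show "finite (lab w)" unfolding lab_def by simp
  show "0 \<notin> lab w" unfolding lab_def g_def using nz valid_pre[OF assms] len by auto
  show "inj_on abs (lab w)"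
  proof (rule inj_onI)
    fix a b assume a: "a \<in> lab w" and b: "b \<in> lab w" and ab: "\<bar>a\<bar> = \<bar>b\<bar>"
    obtain i where i: "i \<in> {1..k}" "a = lam (pre w i)" using a len unfolding lab_def g_def by auto
    obtain j where j: "j \<in> {1..k}" "b = lam (pre w j)" using b len unfolding lab_def g_def by auto
    have vi: "valid n (pre w i)" and vj: "valid n (pre w j)" using valid_pre[OF assms] i j by auto
    show "a = b"
    proof (rule ccontr)
      assume "a \<noteq> b"
      then have "a = - b" using ab by (auto simp: abs_if split: if_splits)
      show False
      proof (cases "i \<le> j")
        case True
        then show False using nocomp[OF vi vj pre_mono[OF True]] \<open>a = - b\<close> i j by simp
      next
        case False
        then have "j \<le> i" by simp
        then show False using nocomp[OF vj vi pre_mono[OF \<open>j \<le> i\<close>]] \<open>a = - b\<close> i j by simp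
      qed
    qed
  qed
qed

lemma room_parity:
  assumes "w \<in> Wk k" "k \<le> n" "1 \<le> k"
  shows "odd (card {j\<in>{1..k}. door w j}) \<longleftrightarrow> card (lab w) = k \<and> (altp (lab w) \<or> altp (uminus ` lab w))"
proof -
  have len: "length w = k" using assms unfolding Wk_def by auto
  define K where "K = {1..k}"
  define h where "h = g w"
  have lab: "lab w = h ` K" unfolding lab_def K_def h_def len ..
  have dr: "door w j \<longleftrightarrow> card (h ` (K - {j})) = k - 1 \<and> altp (h ` (K - {j}))" for j
    unfolding door_def h_def K_def len ..
  have cK: "card K = k" unfolding K_def by simp
  have fK: "finite K" unfolding K_def by simp
  show ?thesis
  proof (cases "inj_on h K")
    case True
    then have cl: "card (lab w) = k" unfolding lab using cK by (simp add: card_image)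
    have dr2: "door w j \<longleftrightarrow> altp (lab w - {h j})" if "j \<in> K" for j
    proof -
      have "h ` (K - {j}) = h ` K - {h j}" using True that by (simp add: inj_on_image_set_diff)
      moreover have "card (h ` K - {h j}) = k - 1" using cl that lab by (simp add: card_Diff_singleton)
      ultimately show ?thesis unfolding dr lab by simp
    qed
    have "{j\<in>K. door w j} = {j\<in>K. altp (lab w - {h j})}" using dr2 by auto
    moreover have "card {j\<in>K. altp (lab w - {h j})} = card {l\<in>lab w. altp (lab w - {l})}"
    proof -
      have "{l\<in>lab w. altp (lab w - {l})} = h ` {j\<in>K. altp (lab w - {h j})}" unfolding lab by auto
      moreover have "inj_on h {j\<in>K. altp (lab w - {h j})}" using True by (rule inj_on_subset) auto
      ultimately show ?thesis by (simp add: card_image)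
    qed
    moreover have "lab w \<noteq> {}" unfolding lab K_def using assms(3) by auto
    ultimately show ?thesis
      using alt_parity[OF lab_props(1)[OF assms(1,2)] \<open>lab w \<noteq> {}\<close> lab_props(2,3)[OF assms(1,2)]] cl unfolding K_def by simp
  next
    case False
    then have cl: "card (lab w) < k" unfolding lab using cK fK
      by (metis card_image_le inj_on_iff_eq_card order_le_imp_less_or_eq)
    have "even (card {j\<in>K. door w j})"
    proof (cases "{j\<in>K. door w j} = {}")
      case True then show ?thesis by (simp only: card.empty) simp
    next
      case False
      then obtain j where j: "j \<in> K" "door w j" by auto
      have c1: "card (h ` (K - {j})) = k - 1" using j dr by simp
      have sub: "h ` (K - {j}) \<subseteq> lab w" unfolding lab by auto
      have eqlab: "h ` (K - {j}) = lab w"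
      proof -
        have fl: "finite (lab w)" unfolding lab using fK by simp
        have "card (h ` (K - {j})) \<le> card (lab w)" using card_mono[OF fl sub] .
        then have "card (h ` (K - {j})) = card (lab w)" using c1 cl by linarith
        then show ?thesis using card_subset_eq[OF fl sub] by simp
      qed
      have "h j \<in> h ` (K - {j})" using eqlab j lab by auto
      then obtain j' where j': "h j = h j'" "j' \<in> K - {j}" by (rule imageE)
      then have j': "j' \<in> K" "j' \<noteq> j" "h j' = h j" by auto
      have injj: "inj_on h (K - {j})"
        using c1 cK j fK by (simp add: card_Diff_singleton inj_on_iff_eq_card)
      have "{j\<in>K. door w j} = {j, j'}"
      proof (intro set_eqI iffI)
        fix x assume x: "x \<in> {j\<in>K. door w j}"
        show "x \<in> {j, j'}"
        proof (rule ccontr)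
          assume "x \<notin> {j, j'}"
          then have "j \<in> K - {x}" "j' \<in> K - {x}" using j j' by auto
          then have "\<not> inj_on h (K - {x})" using j' unfolding inj_on_def by metis
          then have "card (h ` (K - {x})) < card (K - {x})"
            using fK by (metis card_image_le finite_Diff inj_on_iff_eq_card order_le_imp_less_or_eq)
          moreover have "card (K - {x}) = k - 1" using x cK fK by (simp add: card_Diff_singleton)
          ultimately show False using x dr by simp
        qed
      next
        fix x assume x: "x \<in> {j, j'}"
        have "h ` (K - {j'}) = h ` (K - {j})"
        proof -
          have a: "K - {j'} = insert j (K - {j, j'})" using j j' by auto
          have b: "K - {j} = insert j' (K - {j, j'})" using j j' by auto
          show ?thesis unfolding a b using j' by simp
        qed
        then show "x \<in> {j\<in>K. door w j}" using x j j' dr by auto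
      qed
      then show ?thesis using j' by simp
    qed
    then show ?thesis using cl unfolding K_def by simp
  qed
qed

end

lemma take_swap:
  assumes "length xs = j - 1" "1 \<le> j" "i \<noteq> j"
  shows "set (take i (xs @ b # a # ys)) = set (take i (xs @ a # b # ys))"
proof (cases "i < j")
  case True
  then have "i \<le> length xs" using assms by simp
  then show ?thesis by simp
next
  case False
  then have "i \<ge> length xs + 2" using assms by simp
  then obtain t where t: "i = length xs + 2 + t" by (metis le_add_diff_inverse)
  have "take i (xs @ u # v # ys) = xs @ u # v # take t ys" for u v
    unfolding t by simp
  then show ?thesis by auto
qed

context tuck begin

definition Hp :: "nat \<Rightarrow> (nat \<times> bool) list set" where
  "Hp k = {w \<in> Wk k. (k - 1, True) \<in> set w}"

definition II :: "nat \<Rightarrow> ((nat \<times> bool) list \<times> nat) set" where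
  "II k = Sigma (Hp k) (\<lambda>w. {j\<in>{1..k}. door w j})"

definition BB :: "nat \<Rightarrow> ((nat \<times> bool) list \<times> nat) set" where
  "BB k = {p \<in> II k. snd p = k \<and> fst p ! (k - 1) = (k - 1, True)}"

definition cc :: "nat \<Rightarrow> nat" where
  "cc k = card {w \<in> Wk k. card (lab w) = k \<and> altp (lab w)}"

definition fl :: "(nat \<times> bool) list \<Rightarrow> nat \<Rightarrow> (nat \<times> bool) list" where
  "fl w j = (if j < length w then take (j - 1) w @ w ! j # w ! (j - 1) # drop (j + 1) w
             else take (j - 1) w @ [(fst (w ! (j - 1)), \<not> snd (w ! (j - 1)))])"

lemma finite_II: "finite (II k)"
  unfolding II_def Hp_def using finite_Wk by (intro finite_SigmaI) auto

lemma door_cong: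
  assumes "length w' = length w" "\<And>i. i \<in> {1..length w} - {j} \<Longrightarrow> pre w' i = pre w i"
  shows "door w' j = door w j"
proof -
  have "g w' ` ({1..length w} - {j}) = g w ` ({1..length w} - {j})"
    using assms(2) unfolding g_def by (intro image_cong) auto
  then show ?thesis unfolding door_def assms(1) by simp
qed

lemma decomp_swap:
  assumes "length w = k" "1 \<le> j" "j < k"
  shows "w = take (j - 1) w @ w ! (j - 1) # w ! j # drop (j + 1) w"
proof -
  have e: "Suc (j - 1) = j" using assms by simp
  have "w = take (j - 1) w @ w ! (j - 1) # drop (Suc (j - 1)) w" using assms
    by (intro id_take_nth_drop) simp
  also have "\<dots> = take (j - 1) w @ w ! (j - 1) # drop j w" unfolding e ..
  also have "drop j w = w ! j # drop (j + 1) w" using assms by (simp add: Cons_nth_drop_Suc)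
  finally show ?thesis .
qed

lemma fl_swap:
  assumes "length xs = j - 1" "1 \<le> j"
  shows "fl (xs @ a # b # ys) j = xs @ b # a # ys"
proof -
  have jl: "j = Suc (length xs)" using assms by simp
  show ?thesis unfolding fl_def jl by (simp add: nth_append)
qed

lemma fl_top:
  assumes "length xs = k - 1" "1 \<le> k"
  shows "fl (xs @ [(c, e)]) k = xs @ [(c, \<not> e)]"
proof -
  have kl: "k = Suc (length xs)" using assms by simp
  show ?thesis unfolding fl_def kl by (simp add: nth_append)
qed

lemma invol_swap:
  assumes p: "(xs @ a # b # ys, j) \<in> II k - BB k" and lxs: "length xs = j - 1"
    and jk: "j < k" "1 \<le> j"
  shows "(xs @ b # a # ys, j) \<in> II k - BB k \<and> a \<noteq> b"
proof -
  have wH: "xs @ a # b # ys \<in> Hp k" and j: "j \<in> {1..k}" and dw: "door (xs @ a # b # ys) j"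
    using p unfolding II_def by auto
  have len: "length (xs @ a # b # ys) = k" and d: "distinct (map fst (xs @ a # b # ys))"
    and f: "fst ` set (xs @ a # b # ys) = {..<k}" and top: "(k - 1, True) \<in> set (xs @ a # b # ys)"
    using wH unfolding Hp_def Wk_def by auto
  have l2: "length (xs @ b # a # ys) = k" using len by simp
  have d2: "distinct (map fst (xs @ b # a # ys))" using d by auto
  have s2: "set (xs @ b # a # ys) = set (xs @ a # b # ys)" by auto
  have H': "xs @ b # a # ys \<in> Hp k" using l2 d2 s2 f top unfolding Hp_def Wk_def by simp
  have pre_eq: "pre (xs @ b # a # ys) i = pre (xs @ a # b # ys) i" if "i \<noteq> j" for i
    unfolding pre_def using take_swap[OF lxs jk(2) that] .
  have "door (xs @ b # a # ys) j = door (xs @ a # b # ys) j"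
    by (rule door_cong) (use pre_eq l2 len in auto)
  then have "(xs @ b # a # ys, j) \<in> II k" using H' j dw unfolding II_def by auto
  moreover have "(xs @ b # a # ys, j) \<notin> BB k" using jk unfolding BB_def by auto
  moreover have "a \<noteq> b" using d by auto
  ultimately show ?thesis by blast
qed

lemma invol_top:
  assumes p: "(xs @ [(c, e)], k) \<in> II k - BB k" and lxs: "length xs = k - 1" and k: "1 \<le> k"
  shows "(xs @ [(c, \<not> e)], k) \<in> II k - BB k"
proof -
  have wH: "xs @ [(c, e)] \<in> Hp k" and dw: "door (xs @ [(c, e)]) k"
    using p unfolding II_def by auto
  have d: "distinct (map fst (xs @ [(c, e)]))"
    and f: "fst ` set (xs @ [(c, e)]) = {..<k}" and top: "(k - 1, True) \<in> set (xs @ [(c, e)])"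
    using wH unfolding Hp_def Wk_def by auto
  have notB: "(xs @ [(c, e)]) ! (k - 1) \<noteq> (k - 1, True)" using p unfolding BB_def by auto
  then have ce: "(c, e) \<noteq> (k - 1, True)" using lxs by (simp add: nth_append)
  have ck: "c \<noteq> k - 1"
  proof
    assume ck: "c = k - 1"
    have "(c, e) \<in> set (xs @ [(c, e)])" by simp
    then have "e = True" using distinct_fst_eq[OF d] top ck by blast
    then show False using ce ck by simp
  qed
  have topxs: "(k - 1, True) \<in> set xs" using top ck by auto
  have l2: "length (xs @ [(c, \<not> e)]) = k" using lxs k by simp
  have H': "xs @ [(c, \<not> e)] \<in> Hp k"
    using l2 d f topxs unfolding Hp_def Wk_def by auto
  have "door (xs @ [(c, \<not> e)]) k = door (xs @ [(c, e)]) k"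
  proof (rule door_cong)
    show "length (xs @ [(c, \<not> e)]) = length (xs @ [(c, e)])" by simp
    fix i assume "i \<in> {1..length (xs @ [(c, e)])} - {k}"
    then have "i \<le> length xs" using lxs k by auto
    then show "pre (xs @ [(c, \<not> e)]) i = pre (xs @ [(c, e)]) i" unfolding pre_def by simp
  qed
  then have "(xs @ [(c, \<not> e)], k) \<in> II k" using H' k dw unfolding II_def by auto
  moreover have "(xs @ [(c, \<not> e)], k) \<notin> BB k" using ck lxs unfolding BB_def by (auto simp: nth_append)
  ultimately show ?thesis by blast
qed

lemma invol_step:
  assumes p: "(w, j) \<in> II k - BB k" and k: "1 \<le> k"
  shows "(fl w j, j) \<in> II k - BB k \<and> fl (fl w j) j = w \<and> fl w j \<noteq> w"
proof -
  have wH: "w \<in> Hp k" and j: "j \<in> {1..k}" using p unfolding II_def by auto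
  have len: "length w = k" using wH unfolding Hp_def Wk_def by auto
  show ?thesis
  proof (cases "j < k")
    case True
    obtain xs a b ys where w: "w = xs @ a # b # ys" and lxs: "length xs = j - 1"
    proof
      show "w = take (j - 1) w @ w ! (j - 1) # w ! j # drop (j + 1) w"
        using j by (intro decomp_swap[OF len _ True]) simp
      show "length (take (j - 1) w) = j - 1" using len True by simp
    qed
    have j1: "1 \<le> j" using j by simp
    have A: "(xs @ b # a # ys, j) \<in> II k - BB k \<and> a \<noteq> b"
      using invol_swap[OF p[unfolded w] lxs True j1] .
    show ?thesis unfolding w fl_swap[OF lxs j1]
      using A fl_swap[OF lxs j1, of b a ys] by simp
  next
    case False
    then have jk: "j = k" using j by simp
    obtain xs c e where w: "w = xs @ [(c, e)]" and lxs: "length xs = k - 1"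
    proof -
      have "w \<noteq> []" using len k by auto
      then obtain xs x where "w = xs @ [x]" by (metis rev_exhaust)
      moreover obtain c e where "x = (c, e)" by fastforce
      moreover have "length xs = k - 1" using len \<open>w = xs @ [x]\<close> by simp
      ultimately show ?thesis using that by blast
    qed
    have A: "(xs @ [(c, \<not> e)], k) \<in> II k - BB k"
      using invol_top[OF p[unfolded w jk] lxs k] .
    show ?thesis unfolding w jk fl_top[OF lxs k]
      using A fl_top[OF lxs k, of c "\<not> e"] by simp
  qed
qed

lemma even_II_BB:
  assumes "1 \<le> k"
  shows "even (card (II k - BB k))"
proof (rule invol_even[where f = "\<lambda>(w, j). (fl w j, j)"])
  show "finite (II k - BB k)" using finite_II by simp
  fix x assume x: "x \<in> II k - BB k"
  obtain w j where xe: "x = (w, j)" by fastforce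
  show "(case x of (w, j) \<Rightarrow> (fl w j, j)) \<in> II k - BB k"
    using invol_step[OF x[unfolded xe] assms] xe by simp
  show "(case case x of (w, j) \<Rightarrow> (fl w j, j) of (w, j) \<Rightarrow> (fl w j, j)) = x"
    using invol_step[OF x[unfolded xe] assms] xe by simp
  show "(case x of (w, j) \<Rightarrow> (fl w j, j)) \<noteq> x"
    using invol_step[OF x[unfolded xe] assms] xe by simp
qed

end

context tuck begin

lemma II_parity:
  assumes "1 \<le> k" "k \<le> n"
  shows "odd (card (II k)) \<longleftrightarrow>
    odd (card {w\<in>Hp k. card (lab w) = k \<and> (altp (lab w) \<or> altp (uminus ` lab w))})"
proof -
  have fH: "finite (Hp k)" unfolding Hp_def using finite_Wk by simp
  have "card (II k) = (\<Sum>w\<in>Hp k. card {j\<in>{1..k}. door w j})"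
    unfolding II_def using fH by (intro card_SigmaI) auto
  then have "odd (card (II k)) \<longleftrightarrow> odd (card {w\<in>Hp k. odd (card {j\<in>{1..k}. door w j})})"
    using odd_sum_card[OF fH] by simp
  moreover have "{w\<in>Hp k. odd (card {j\<in>{1..k}. door w j})} =
      {w\<in>Hp k. card (lab w) = k \<and> (altp (lab w) \<or> altp (uminus ` lab w))}"
    using room_parity[OF _ assms(2,1)] unfolding Hp_def by auto
  ultimately show ?thesis by simp
qed

lemma g_append:
  assumes "i \<le> length v"
  shows "g (v @ [x]) i = g v i"
  unfolding g_def pre_def using assms by simp

lemma BB_card:
  assumes "1 \<le> k" "k \<le> n"
  shows "card (BB k) = cc (k - 1)"
proof -
  define V where "V = {v \<in> Wk (k - 1). card (lab v) = k - 1 \<and> altp (lab v)}"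
  define \<phi> where "\<phi> v = (v @ [(k - 1, True)], k)" for v
  have facet: "g (v @ [x]) ` ({1..length v + 1} - {length v + 1}) = lab v" for v x
  proof -
    have "{1..length v + 1} - {length v + 1} = {1..length v}" by auto
    then show ?thesis unfolding lab_def using g_append by (auto intro!: image_cong)
  qed
  have "BB k = \<phi> ` V"
  proof (intro set_eqI iffI)
    fix p assume p: "p \<in> BB k"
    obtain w j where pe: "p = (w, j)" by fastforce
    have wH: "w \<in> Hp k" and jk: "j = k" and dw: "door w j" and wl: "w ! (k - 1) = (k - 1, True)"
      using p unfolding pe BB_def II_def by auto
    have len: "length w = k" and d: "distinct (map fst w)" and f: "fst ` set w = {..<k}"
      using wH unfolding Hp_def Wk_def by auto
    define v where "v = take (k - 1) w"
    have wv: "w = v @ [(k - 1, True)]"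
    proof -
      have "take (Suc (k - 1)) w = take (k - 1) w @ [w ! (k - 1)]"
        using len assms by (intro take_Suc_conv_app_nth) simp
      moreover have "Suc (k - 1) = k" using assms by simp
      moreover have "take k w = w" using len by simp
      ultimately show ?thesis unfolding v_def using wl by metis
    qed
    have lv: "length v = k - 1" unfolding v_def using len by simp
    have dv: "distinct (map fst v)" using d unfolding wv by simp
    have nk: "k - 1 \<notin> fst ` set v" using d unfolding wv by auto
    have "fst ` set v = {..<k - 1}"
    proof -
      have "insert (k - 1) (fst ` set v) = {..<k}" using f unfolding wv by simp
      then have "fst ` set v = {..<k} - {k - 1}" using nk by blast
      also have "\<dots> = {..<k - 1}" using assms by auto
      finally show ?thesis .
    qed
    then have vW: "v \<in> Wk (k - 1)" unfolding Wk_def using lv dv by simp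
    have "door w k" using dw jk by simp
    then have "card (lab v) = k - 1 \<and> altp (lab v)"
      unfolding door_def using facet[of v "(k - 1, True)"] lv assms unfolding wv
      by (simp add: Suc_diff_1)
    then have "v \<in> V" unfolding V_def using vW by simp
    then show "p \<in> \<phi> ` V" unfolding pe \<phi>_def wv jk by blast
  next
    fix p assume "p \<in> \<phi> ` V"
    then obtain v where v: "v \<in> V" "p = (v @ [(k - 1, True)], k)" unfolding \<phi>_def by blast
    have lv: "length v = k - 1" and dv: "distinct (map fst v)" and fv: "fst ` set v = {..<k - 1}"
      and cv: "card (lab v) = k - 1" and av: "altp (lab v)"
      using v(1) unfolding V_def Wk_def by auto
    define w where "w = v @ [(k - 1, True)]"
    have "length w = k" unfolding w_def using lv assms by simp
    moreover have "distinct (map fst w)" unfolding w_def using dv fv by auto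
    moreover have "fst ` set w = {..<k}" unfolding w_def using fv assms
      by (auto simp: lessThan_Suc[symmetric])
    moreover have "(k - 1, True) \<in> set w" unfolding w_def by simp
    ultimately have wH: "w \<in> Hp k" unfolding Hp_def Wk_def by simp
    have "door w k"
      unfolding door_def w_def using facet[of v "(k - 1, True)"] lv cv av assms
      by (simp add: Suc_diff_1)
    moreover have "w ! (k - 1) = (k - 1, True)" unfolding w_def using lv by (simp add: nth_append)
    ultimately show "p \<in> BB k" unfolding BB_def II_def v(2) w_def[symmetric] using wH assms by auto
  qed
  moreover have "inj_on \<phi> V" unfolding \<phi>_def inj_on_def by auto
  ultimately have "card (BB k) = card V" by (simp add: card_image)
  then show ?thesis unfolding cc_def V_def .
qed

end

lemma negw_negw[simp]: "negw (negw w) = w"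
  unfolding negw_def by (induction w) auto

lemma map_fst_negw[simp]: "map fst (negw w) = map fst w"
  unfolding negw_def by simp

lemma negw_Wk: "w \<in> Wk k \<Longrightarrow> negw w \<in> Wk k"
proof -
  assume "w \<in> Wk k"
  moreover have "length (negw w) = length w" unfolding negw_def by simp
  moreover have "fst ` set (negw w) = fst ` set w" by (metis list.set_map map_fst_negw)
  ultimately show ?thesis unfolding Wk_def by simp
qed

lemma pre_negw: "pre (negw w) i = negs (pre w i)"
  unfolding pre_def negw_def negs_def by (simp add: take_map)

lemma mem_negw: "(a, b) \<in> set (negw w) \<longleftrightarrow> (a, \<not> b) \<in> set w"
  unfolding negw_def by force

context tuck begin

lemma lab_negw:
  assumes "w \<in> Wk k" "k \<le> n"
  shows "lab (negw w) = uminus ` lab w"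
proof -
  have len: "length w = k" using assms unfolding Wk_def by simp
  have ln: "length (negw w) = k" using len unfolding negw_def by simp
  have "g (negw w) i = - g w i" if "i \<in> {1..k}" for i
    unfolding g_def pre_negw using antip[OF valid_pre[OF assms]] that by simp
  then have "lab (negw w) = (\<lambda>i. - g w i) ` {1..k}" unfolding lab_def ln by (auto intro!: image_cong)
  also have "\<dots> = uminus ` lab w" unfolding lab_def len by (simp add: image_image)
  finally show ?thesis .
qed

lemma cc_Hp:
  assumes "1 \<le> k" "k \<le> n"
  shows "cc k = card {w\<in>Hp k. card (lab w) = k \<and> (altp (lab w) \<or> altp (uminus ` lab w))}"
proof -
  define P where "P L \<longleftrightarrow> card L = k \<and> altp L" for L
  define S1 where "S1 = {w\<in>Hp k. P (lab w)}"
  define S2 where "S2 = {w\<in>Wk k. (k - 1, True) \<notin> set w \<and> P (lab w)}"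
  define T where "T = {w\<in>Hp k. P (uminus ` lab w)}"
  have fW: "finite (Wk k)" by (rule finite_Wk)
  have split: "{w\<in>Wk k. P (lab w)} = S1 \<union> S2" unfolding S1_def S2_def Hp_def by auto
  have disj: "S1 \<inter> S2 = {}" unfolding S1_def S2_def Hp_def by auto
  have f1: "finite S1" "finite S2" unfolding S1_def S2_def Hp_def using fW by auto
  have S2T: "S2 = negw ` T"
  proof (intro set_eqI iffI)
    fix w assume w: "w \<in> S2"
    then have wW: "w \<in> Wk k" and nt: "(k - 1, True) \<notin> set w" and pw: "P (lab w)"
      unfolding S2_def by auto
    have "k - 1 \<in> fst ` set w" using wW assms unfolding Wk_def by auto
    then obtain b where "(k - 1, b) \<in> set w" by force
    then have "(k - 1, False) \<in> set w" using nt by (cases b) auto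
    then have "(k - 1, True) \<in> set (negw w)" by (simp add: mem_negw)
    then have "negw w \<in> Hp k" unfolding Hp_def using negw_Wk[OF wW] by simp
    moreover have "P (uminus ` lab (negw w))"
      using pw lab_negw[OF negw_Wk[OF wW] assms(2)] by (simp add: image_image)
    ultimately have "negw w \<in> T" unfolding T_def by simp
    then show "w \<in> negw ` T" by (metis image_eqI negw_negw)
  next
    fix w assume "w \<in> negw ` T"
    then obtain v where v: "v \<in> T" "w = negw v" by blast
    have vW: "v \<in> Wk k" and vt: "(k - 1, True) \<in> set v" and pv: "P (uminus ` lab v)"
      using v(1) unfolding T_def Hp_def by auto
    have d: "distinct (map fst v)" using vW unfolding Wk_def by simp
    have "(k - 1, False) \<notin> set v" using distinct_fst_eq[OF d vt] by auto
    then have "(k - 1, True) \<notin> set w" unfolding v(2) by (simp add: mem_negw)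
    moreover have "w \<in> Wk k" unfolding v(2) using negw_Wk[OF vW] .
    moreover have "P (lab w)" unfolding v(2) lab_negw[OF vW assms(2)] using pv .
    ultimately show "w \<in> S2" unfolding S2_def by simp
  qed
  have injn: "inj_on negw T" by (metis inj_onI negw_negw)
  have cS2: "card S2 = card T" unfolding S2T using injn by (simp add: card_image)
  have PT: "P (uminus ` L) \<longleftrightarrow> card L = k \<and> altp (uminus ` L)" for L
    unfolding P_def by (simp add: card_image)
  have fT: "finite T" "finite S1" unfolding T_def S1_def Hp_def using fW by auto
  have "card S1 + card T = card (S1 \<union> T)"
  proof (rule card_Un_disjoint[symmetric, OF fT(2) fT(1)])
    show "S1 \<inter> T = {}"
    proof (rule ccontr)
      assume "S1 \<inter> T \<noteq> {}"
      then obtain w where w: "w \<in> Hp k" "P (lab w)" "P (uminus ` lab w)" unfolding S1_def T_def by auto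
      have wW: "w \<in> Wk k" using w(1) unfolding Hp_def by simp
      have "lab w \<noteq> {}" using wW assms unfolding lab_def Wk_def by auto
      then show False using altp_both[OF lab_props(1)[OF wW assms(2)] _ lab_props(2)[OF wW assms(2)]] w
        unfolding P_def by blast
    qed
  qed
  moreover have "S1 \<union> T = {w\<in>Hp k. card (lab w) = k \<and> (altp (lab w) \<or> altp (uminus ` lab w))}"
    unfolding S1_def T_def using PT unfolding P_def by auto
  ultimately show ?thesis unfolding cc_def P_def[symmetric] split
    using card_Un_disjoint[OF f1 disj] cS2 by simp
qed

lemma cc_step:
  assumes "1 \<le> k" "k \<le> n"
  shows "odd (cc k) \<longleftrightarrow> odd (cc (k - 1))"
proof -
  have sub: "BB k \<subseteq> II k" unfolding BB_def by auto
  have "card (II k) = card (II k - BB k) + card (BB k)"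
    using sub finite_II by (metis card_Diff_subset card_mono finite_subset le_add_diff_inverse2)
  then have "odd (card (II k)) \<longleftrightarrow> odd (card (BB k))" using even_II_BB[OF assms(1)] by simp
  then show ?thesis using II_parity[OF assms] cc_Hp[OF assms] BB_card[OF assms] by simp
qed

lemma cc_0: "cc 0 = 1"
proof -
  have "Wk 0 = {[]}" unfolding Wk_def by auto
  moreover have "lab [] = {}" unfolding lab_def by simp
  ultimately have "{w \<in> Wk 0. card (lab w) = 0 \<and> altp (lab w)} = {[]}" by (auto simp: altp_def)
  then show ?thesis unfolding cc_def by simp
qed

lemma cc_odd: "k \<le> n \<Longrightarrow> odd (cc k)"
proof (induction k)
  case 0 then show ?case by (simp add: cc_0)
next
  case (Suc k)
  then show ?case using cc_step[of "Suc k"] by simp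
qed

theorem tucker_bound: "n \<le> M"
proof -
  have "odd (cc n)" using cc_odd[of n] by simp
  then have "cc n \<noteq> 0" by (metis even_zero)
  then have "{w \<in> Wk n. card (lab w) = n \<and> altp (lab w)} \<noteq> {}" unfolding cc_def by (metis card.empty)
  then obtain w where w: "w \<in> Wk n" "card (lab w) = n" by auto
  have len: "length w = n" using w unfolding Wk_def by simp
  have sub: "abs ` lab w \<subseteq> {1..int M}"
  proof
    fix a assume "a \<in> abs ` lab w"
    then obtain i where i: "i \<in> {1..n}" "a = \<bar>lam (pre w i)\<bar>" unfolding lab_def g_def len by auto
    have v: "valid n (pre w i)" using valid_pre[OF w(1) order.refl] i by simp
    show "a \<in> {1..int M}" using i nz[OF v] bnd[OF v] by auto
  qed
  have "card (abs ` lab w) = n" using w(2) lab_props(3)[OF w(1) order.refl] by (simp add: card_image)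
  moreover have "card (abs ` lab w) \<le> card {1..int M}" using sub by (intro card_mono) auto
  ultimately show ?thesis by simp
qed

end

lemma tucker:
  assumes "\<And>x. valid n x \<Longrightarrow> lam (negs x) = - lam x"
    and "\<And>x. valid n x \<Longrightarrow> lam x \<noteq> 0"
    and "\<And>x. valid n x \<Longrightarrow> \<bar>lam x\<bar> \<le> int M"
    and "\<And>x y. valid n x \<Longrightarrow> valid n y \<Longrightarrow> x \<subseteq> y \<Longrightarrow> lam x \<noteq> - lam y"
  shows "n \<le> M"
proof -
  interpret tuck n M lam using assms by unfold_locales
  show ?thesis by (rule tucker_bound)
qed

definition PP :: "(nat \<times> bool) set \<Rightarrow> nat set" where "PP x = {i. (i, True) \<in> x}"
definition NN :: "(nat \<times> bool) set \<Rightarrow> nat set" where "NN x = {i. (i, False) \<in> x}"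

lemma valid_finite: "valid n x \<Longrightarrow> finite x"
proof -
  assume v: "valid n x"
  have "x \<subseteq> {..<n} \<times> UNIV" using v unfolding valid_def by force
  moreover have "finite ({..<n} \<times> (UNIV :: bool set))" by simp
  ultimately show ?thesis by (rule finite_subset)
qed

lemma split_pm: "x = (\<lambda>i. (i, True)) ` PP x \<union> (\<lambda>i. (i, False)) ` NN x"
proof (intro set_eqI iffI)
  fix p assume p: "p \<in> x"
  show "p \<in> (\<lambda>i. (i, True)) ` PP x \<union> (\<lambda>i. (i, False)) ` NN x"
  proof (cases "snd p")
    case True
    have "(fst p, snd p) \<in> x" using p by simp
    then have "(fst p, True) \<in> x" using True by simp
    then have a: "fst p \<in> PP x" unfolding PP_def by simp
    have b: "p = (fst p, True)" using True by (simp add: prod_eq_iff)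
    show ?thesis by (subst b) (rule UnI1, rule imageI, rule a)
  next
    case False
    have "(fst p, snd p) \<in> x" using p by simp
    then have "(fst p, False) \<in> x" using False by simp
    then have a: "fst p \<in> NN x" unfolding NN_def by simp
    have b: "p = (fst p, False)" using False by (simp add: prod_eq_iff)
    show ?thesis by (subst b) (rule UnI2, rule imageI, rule a)
  qed
next
  fix p assume "p \<in> (\<lambda>i. (i, True)) ` PP x \<union> (\<lambda>i. (i, False)) ` NN x"
  then show "p \<in> x" unfolding PP_def NN_def by auto
qed

lemma valid_card_split:
  assumes "valid n x"
  shows "card x = card (PP x) + card (NN x)" "PP x \<inter> NN x = {}" "PP x \<subseteq> {..<n}" "NN x \<subseteq> {..<n}"
proof -
  have f: "finite x" using valid_finite[OF assms] .
  define A where "A = (\<lambda>i. (i, True)) ` PP x"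
  define B where "B = (\<lambda>i. (i, False)) ` NN x"
  have e: "x = A \<union> B" unfolding A_def B_def by (rule split_pm)
  have "PP x \<subseteq> fst ` x" unfolding PP_def by (auto intro: rev_image_eqI)
  then have fP: "finite (PP x)" using f by (meson finite_imageI finite_subset)
  have "NN x \<subseteq> fst ` x" unfolding NN_def by (auto intro: rev_image_eqI)
  then have fN: "finite (NN x)" using f by (meson finite_imageI finite_subset)
  have AB: "A \<inter> B = {}" unfolding A_def B_def by blast
  have "card x = card (A \<union> B)" using e by simp
  also have "\<dots> = card A + card B" using AB fP fN unfolding A_def B_def by (intro card_Un_disjoint) auto
  also have "\<dots> = card (PP x) + card (NN x)" unfolding A_def B_def by (simp add: card_image inj_on_def)
  finally show "card x = card (PP x) + card (NN x)" .
  show "PP x \<inter> NN x = {}" using assms unfolding valid_def PP_def NN_def by auto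
  have fx: "fst ` x \<subseteq> {..<n}" using assms unfolding valid_def by blast
  show "PP x \<subseteq> {..<n}"
  proof
    fix i assume "i \<in> PP x"
    then have "(i, True) \<in> x" unfolding PP_def by simp
    then have "fst (i, True) \<in> fst ` x" by (rule imageI)
    then show "i \<in> {..<n}" using fx by auto
  qed
  show "NN x \<subseteq> {..<n}"
  proof
    fix i assume "i \<in> NN x"
    then have "(i, False) \<in> x" unfolding NN_def by simp
    then have "fst (i, False) \<in> fst ` x" by (rule imageI)
    then show "i \<in> {..<n}" using fx by auto
  qed
qed

lemma PP_negs[simp]: "PP (negs x) = NN x" and NN_negs[simp]: "NN (negs x) = PP x"
  unfolding PP_def NN_def negs_def by force+

lemma negs_inj: "inj_on (\<lambda>p. (fst p, \<not> snd p)) A"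
  by (auto simp: inj_on_def prod_eq_iff)

lemma card_negs[simp]: "card (negs x) = card x"
  unfolding negs_def by (simp add: card_image negs_inj)

lemma fst_negs[simp]: "fst ` negs x = fst ` x"
  unfolding negs_def by force

lemma mem_negs: "(a, b) \<in> negs x \<longleftrightarrow> (a, \<not> b) \<in> x"
  unfolding negs_def by force

lemma valid_negs: "valid n x \<Longrightarrow> valid n (negs x)"
proof -
  assume v: "valid n x"
  have "negs x \<noteq> {}" using v unfolding valid_def negs_def by simp
  moreover have "fst ` negs x \<subseteq> {..<n}" using v unfolding valid_def by simp
  moreover have "\<not> ((i, True) \<in> negs x \<and> (i, False) \<in> negs x)" for i
    using v unfolding valid_def mem_negs by auto
  ultimately show ?thesis unfolding valid_def by blast
qed

definition colr :: "(nat \<Rightarrow> nat set set) \<Rightarrow> nat \<Rightarrow> nat set \<Rightarrow> nat" where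
  "colr G m Z = (if \<exists>j<m. Z \<in> G j then Suc (GREATEST j. j < m \<and> Z \<in> G j) else 0)"

lemma colr_le: "colr G m Z \<le> m"
proof (cases "\<exists>j<m. Z \<in> G j")
  case True
  then obtain j where j: "j < m \<and> Z \<in> G j" by blast
  have "(GREATEST j. j < m \<and> Z \<in> G j) < m \<and> Z \<in> G (GREATEST j. j < m \<and> Z \<in> G j)"
    by (rule GreatestI_nat[of _ j m]) (use j in auto)
  then show ?thesis unfolding colr_def using True by simp
next
  case False then show ?thesis unfolding colr_def if_not_P[OF False] by simp
qed

lemma colr_SucD: "colr G m Z = Suc j \<Longrightarrow> j < m \<and> Z \<in> G j"
proof -
  assume c: "colr G m Z = Suc j"
  then have ex: "\<exists>j<m. Z \<in> G j" unfolding colr_def by (auto split: if_splits)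
  then obtain j0 where j0: "j0 < m \<and> Z \<in> G j0" by blast
  have "(GREATEST j. j < m \<and> Z \<in> G j) < m \<and> Z \<in> G (GREATEST j. j < m \<and> Z \<in> G j)"
    by (rule GreatestI_nat[of _ j0 m]) (use j0 in auto)
  moreover have "j = (GREATEST j. j < m \<and> Z \<in> G j)" using c ex unfolding colr_def by simp
  ultimately show ?thesis by simp
qed

lemma colr_pos: "j < m \<Longrightarrow> Z \<in> G j \<Longrightarrow> 1 \<le> colr G m Z"
  unfolding colr_def by auto

definition knlab :: "(nat \<Rightarrow> nat set set) \<Rightarrow> nat \<Rightarrow> nat \<Rightarrow> (nat \<times> bool) set \<Rightarrow> int" where
  "knlab G m k x = (if card x \<le> 2 * k - 2
     then (if (LEAST i. i \<in> fst ` x, True) \<in> x then 1 else -1) * int (card x)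
     else (if colr G m (NN x) < colr G m (PP x) then 1 else -1)
            * int (2 * k - 2 + max (colr G m (PP x)) (colr G m (NN x))))"

lemma kneser_idx:
  fixes G :: "nat \<Rightarrow> nat set set"
  assumes k: "1 \<le> k"
    and up: "\<And>j A B. j < m \<Longrightarrow> A \<in> G j \<Longrightarrow> A \<subseteq> B \<Longrightarrow> B \<subseteq> {..<n} \<Longrightarrow> B \<in> G j"
    and inter: "\<And>j A B. j < m \<Longrightarrow> A \<in> G j \<Longrightarrow> B \<in> G j \<Longrightarrow> A \<inter> B \<noteq> {}"
    and cover: "\<And>A. A \<subseteq> {..<n} \<Longrightarrow> card A = k \<Longrightarrow> \<exists>j<m. A \<in> G j"
  shows "n + 2 \<le> 2 * k + m"
proof -
  define lam where "lam = knlab G m k"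
  define c where "c = colr G m"
  have big: "1 \<le> c Z" if Zs: "Z \<subseteq> {..<n}" "k \<le> card Z" for Z
  proof -
    obtain A where A: "A \<subseteq> Z" "card A = k" "finite A"
      using obtain_subset_with_card_n[OF Zs(2)] by blast
    obtain j where j: "j < m" "A \<in> G j" using cover[of A] A Zs(1) by auto
    have "Z \<in> G j" using up[OF j A(1) Zs(1)] .
    then show ?thesis unfolding c_def using colr_pos[OF j(1)] by simp
  qed
  have large: "c (PP x) \<noteq> c (NN x) \<and> 1 \<le> max (c (PP x)) (c (NN x))"
    if v: "valid n x" and l: "\<not> card x \<le> 2 * k - 2" for x
  proof -
    note sp = valid_card_split[OF v]
    have "k \<le> card (PP x) \<or> k \<le> card (NN x)" using sp(1) l by linarith
    then have m1: "1 \<le> max (c (PP x)) (c (NN x))" using big sp(3,4) by (meson le_max_iff_disj)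
    have "c (PP x) \<noteq> c (NN x)"
    proof
      assume eq: "c (PP x) = c (NN x)"
      have "1 \<le> c (PP x)" using m1 eq by simp
      then obtain j where j: "c (PP x) = Suc j" by (metis Suc_le_D One_nat_def)
      then have "j < m \<and> PP x \<in> G j" "NN x \<in> G j" using colr_SucD eq unfolding c_def by metis+
      then show False using inter sp(2) by blast
    qed
    then show ?thesis using m1 by simp
  qed
  have abs_small: "\<bar>lam x\<bar> = int (card x)" if "card x \<le> 2 * k - 2" for x
    unfolding lam_def knlab_def using that by simp
  have abs_large: "\<bar>lam x\<bar> = int (2 * k - 2 + max (c (PP x)) (c (NN x)))" if "\<not> card x \<le> 2 * k - 2" for x
    unfolding lam_def knlab_def c_def using that by simp
  have "n \<le> 2 * k - 2 + m"
  proof (rule tucker[where lam = lam])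
    fix x assume v: "valid n x"
    have vn: "valid n (negs x)" using valid_negs[OF v] .
    show "lam (negs x) = - lam x"
    proof (cases "card x \<le> 2 * k - 2")
      case True
      define i0 where "i0 = (LEAST i. i \<in> fst ` x)"
      have "fst ` x \<noteq> {}" using v unfolding valid_def by simp
      then have "i0 \<in> fst ` x" unfolding i0_def by (metis LeastI_ex all_not_in_conv)
      then obtain b where "(i0, b) \<in> x" by force
      then have "(i0, True) \<in> x \<or> (i0, False) \<in> x" by (cases b) auto
      moreover have "\<not> ((i0, True) \<in> x \<and> (i0, False) \<in> x)" using v unfolding valid_def by blast
      ultimately have "(i0, True) \<in> negs x \<longleftrightarrow> \<not> (i0, True) \<in> x" unfolding mem_negs by auto
      then show ?thesis unfolding lam_def knlab_def using True by (simp add: i0_def)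
    next
      case False
      have "c (PP x) \<noteq> c (NN x)" using large[OF v False] by simp
      then show ?thesis unfolding lam_def knlab_def c_def[symmetric] using False
        by (auto simp: max.commute)
    qed
    show "lam x \<noteq> 0"
    proof (cases "card x \<le> 2 * k - 2")
      case True
      have "card x \<noteq> 0" using v valid_finite[OF v] unfolding valid_def by simp
      then show ?thesis using abs_small[OF True] by auto
    next
      case False
      then show ?thesis using abs_large[OF False] large[OF v False] by auto
    qed
    show "\<bar>lam x\<bar> \<le> int (2 * k - 2 + m)"
    proof (cases "card x \<le> 2 * k - 2")
      case True
      then show ?thesis using abs_small[OF True] by simp
    next
      case False
      have "max (c (PP x)) (c (NN x)) \<le> m" unfolding c_def using colr_le by simp
      then show ?thesis using abs_large[OF False] by simp
    qed
  next
    fix x y assume vx: "valid n x" and vy: "valid n y" and xy: "x \<subseteq> y"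
    have fy: "finite y" using valid_finite[OF vy] .
    have cxy: "card x \<le> card y" using card_mono[OF fy xy] .
    show "lam x \<noteq> - lam y"
    proof
      assume opp: "lam x = - lam y"
      then have aeq: "\<bar>lam x\<bar> = \<bar>lam y\<bar>" by simp
      show False
      proof (cases "card y \<le> 2 * k - 2")
        case ys: True
        then have xs: "card x \<le> 2 * k - 2" using cxy by simp
        have "card x = card y" using aeq abs_small[OF xs] abs_small[OF ys] by simp
        then have "x = y" using card_subset_eq[OF fy xy] by simp
        then have "lam x = 0" using opp by simp
        moreover have "card x \<noteq> 0" using vx valid_finite[OF vx] unfolding valid_def by simp
        ultimately show False using abs_small[OF xs] by simp
      next
        case ys: False
        note ly = large[OF vy ys]
        show False
        proof (cases "card x \<le> 2 * k - 2")
          case xs: True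
          then show False using aeq abs_small[OF xs] abs_large[OF ys] ly by simp
        next
          case xs: False
          note lx = large[OF vx xs]
          have meq: "max (c (PP x)) (c (NN x)) = max (c (PP y)) (c (NN y))"
            using aeq abs_large[OF xs] abs_large[OF ys] by simp
          have lamx: "lam x = (if c (NN x) < c (PP x) then 1 else -1) * int (2 * k - 2 + max (c (PP x)) (c (NN x)))"
            unfolding lam_def knlab_def c_def using xs by simp
          have lamy: "lam y = (if c (NN y) < c (PP y) then 1 else -1) * int (2 * k - 2 + max (c (PP y)) (c (NN y)))"
            unfolding lam_def knlab_def c_def using ys by simp
          have sx: "c (NN x) < c (PP x) \<longleftrightarrow> \<not> c (NN y) < c (PP y)"
          proof -
            have "int (2 * k - 2 + max (c (PP x)) (c (NN x))) > 0" using lx by simp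
            then show ?thesis using opp meq unfolding lamx lamy by (auto split: if_splits)
          qed
          have spx: "PP x \<subseteq> PP y" "NN x \<subseteq> NN y" using xy unfolding PP_def NN_def by auto
          have dy: "PP y \<inter> NN y = {}" using valid_card_split(2)[OF vy] .
          show False
          proof (cases "c (NN x) < c (PP x)")
            case True
            then have "c (PP y) < c (NN y)" using sx ly by auto
            then have "c (PP x) = c (NN y)" using meq True by (simp add: max_def split: if_splits)
            moreover obtain j where j: "c (PP x) = Suc j" using True by (cases "c (PP x)") auto
            ultimately have "PP x \<in> G j" "NN y \<in> G j" "j < m" using colr_SucD unfolding c_def by metis+
            then have "PP x \<inter> NN y \<noteq> {}" using inter by blast
            then show False using spx dy by blast
          next
            case False
            then have "c (PP x) < c (NN x)" using lx by auto
            moreover have "c (NN y) < c (PP y)" using sx False by auto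
            ultimately have "c (NN x) = c (PP y)" using meq by (simp add: max_def split: if_splits)
            moreover obtain j where j: "c (NN x) = Suc j" using \<open>c (PP x) < c (NN x)\<close> by (cases "c (NN x)") auto
            ultimately have "NN x \<in> G j" "PP y \<in> G j" "j < m" using colr_SucD unfolding c_def by metis+
            then have "NN x \<inter> PP y \<noteq> {}" using inter by blast
            then show False using spx dy by blast
          qed
        qed
      qed
    qed
  qed
  then show ?thesis using k by simp
qed

lemma conv_mono: "A \<subseteq> B \<Longrightarrow> conv_hull C A \<subseteq> conv_hull C B"
  unfolding conv_hull_def by (rule Inter_anti_mono) (auto)

lemma conv_sup: "A \<subseteq> conv_hull C A"
  unfolding conv_hull_def by (rule Inter_greatest) simp

lemma conv_in:
  assumes "convexity_space X C" "A \<subseteq> X"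
  shows "conv_hull C A \<in> C"
proof -
  have D: "{c \<in> C. A \<subseteq> c} \<subseteq> C \<and> {c \<in> C. A \<subseteq> c} \<noteq> {}"
  proof
    show "{c \<in> C. A \<subseteq> c} \<subseteq> C" by (rule Collect_subset)
    have "X \<in> {c \<in> C. A \<subseteq> c}" using assms unfolding convexity_space_def by simp
    then show "{c \<in> C. A \<subseteq> c} \<noteq> {}" by (rule ex_in_conv[THEN iffD1, OF exI])
  qed
  have "\<forall>D. D \<subseteq> C \<and> D \<noteq> {} \<longrightarrow> \<Inter>D \<in> C" using assms(1) unfolding convexity_space_def by simp
  then have "{c \<in> C. A \<subseteq> c} \<subseteq> C \<and> {c \<in> C. A \<subseteq> c} \<noteq> {} \<longrightarrow> \<Inter>{c \<in> C. A \<subseteq> c} \<in> C"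
    by (rule spec)
  then have "\<Inter>{c \<in> C. A \<subseteq> c} \<in> C" using D by (rule mp)
  then show ?thesis unfolding conv_hull_def .
qed

lemma shatters_D:
  assumes "radon_shatters C Y" "A \<subseteq> Y"
  shows "conv_hull C A \<inter> conv_hull C (Y - A) = {}"
proof -
  have "\<forall>Y1 Y2. Y1 \<union> Y2 = Y \<and> Y1 \<inter> Y2 = {} \<longrightarrow> conv_hull C Y1 \<inter> conv_hull C Y2 = {}"
    using assms(1) unfolding radon_shatters_def .
  then have "A \<union> (Y - A) = Y \<and> A \<inter> (Y - A) = {} \<longrightarrow> conv_hull C A \<inter> conv_hull C (Y - A) = {}"
    by (elim allE)
  moreover have "A \<union> (Y - A) = Y \<and> A \<inter> (Y - A) = {}" using assms(2) by auto
  ultimately show ?thesis by (rule mp)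
qed

lemma conv_trace:
  assumes "radon_shatters C Y" "A \<subseteq> Y"
  shows "conv_hull C A \<inter> Y = A"
proof
  show "A \<subseteq> conv_hull C A \<inter> Y" using conv_sup[of A C] assms(2) by (rule Int_greatest)
  show "conv_hull C A \<inter> Y \<subseteq> A"
  proof
    fix y assume y: "y \<in> conv_hull C A \<inter> Y"
    show "y \<in> A"
    proof (rule ccontr)
      assume "y \<notin> A"
      then have "y \<in> Y - A" using y by simp
      then have "y \<in> conv_hull C (Y - A)" using conv_sup[of "Y - A" C] by (rule subsetD[rotated])
      moreover have "y \<in> conv_hull C A" using y by simp
      ultimately have "y \<in> conv_hull C A \<inter> conv_hull C (Y - A)" by simp
      then show False using shatters_D[OF assms] by simp
    qed
  qed
qed

lemma net_lower_bound:
  fixes X :: "'a set" and C :: "'a set set" and \<epsilon> :: real and r :: nat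
  assumes cs: "convexity_space X C" and eps: "\<epsilon> > 0" and r: "r > 0"
    and YX: "Y \<subseteq> X" and fY: "finite Y" and cY: "card Y = r" and sh: "radon_shatters C Y"
    and mu: "\<And>c. c \<in> C \<Longrightarrow> measure M c = real (card (Y \<inter> c)) / real r"
    and net: "weak_eps_net C M \<epsilon> S" and fS: "finite S"
  shows "real (card S) \<ge> (1 - 2 * \<epsilon>) * real r"
proof -
  define k where "k = nat \<lceil>\<epsilon> * real r\<rceil>"
  have epsr: "\<epsilon> * real r > 0" using eps r by simp
  have kge: "\<epsilon> * real r \<le> real k" unfolding k_def by (rule real_nat_ceiling_ge)
  have k1: "1 \<le> k" unfolding k_def using epsr by linarith
  have klt: "real k < \<epsilon> * real r + 1"
  proof -
    have "real k = real_of_int \<lceil>\<epsilon> * real r\<rceil>" unfolding k_def using epsr by simp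
    then show ?thesis by linarith
  qed
  obtain e where e: "bij_betw e {0..<card Y} Y" using ex_bij_betw_nat_finite[OF fY] by blast
  obtain t where t: "bij_betw t {0..<card S} S" using ex_bij_betw_nat_finite[OF fS] by blast
  have er: "{0..<card Y} = {..<r}" using cY by auto
  have einj: "inj_on e {..<r}" and eim: "e ` {..<r} = Y" using e unfolding bij_betw_def er by auto
  define m where "m = card S"
  define G where "G j = {A. A \<subseteq> {..<r} \<and> t j \<in> conv_hull C (e ` A)}" for j
  have "r + 2 \<le> 2 * k + m"
  proof (rule kneser_idx[OF k1])
    fix j A B assume "j < m" "A \<in> G j" "A \<subseteq> B" "B \<subseteq> {..<r}"
    then show "B \<in> G j" unfolding G_def using conv_mono[of "e ` A" "e ` B" C] by blast
  next
    fix j A B assume j: "j < m" and A: "A \<in> G j" and B: "B \<in> G j"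
    show "A \<inter> B \<noteq> {}"
    proof
      assume AB: "A \<inter> B = {}"
      have Ar: "A \<subseteq> {..<r}" and Br: "B \<subseteq> {..<r}" using A B unfolding G_def by auto
      have eAY: "e ` A \<subseteq> Y" using image_mono[OF Ar, of e] unfolding eim .
      have "e ` B \<subseteq> Y - e ` A"
      proof -
        have "e ` A \<inter> e ` B = e ` (A \<inter> B)" using inj_on_image_Int[OF einj Ar Br] by simp
        then have "e ` A \<inter> e ` B = {}" using AB by simp
        moreover have "e ` B \<subseteq> Y" using image_mono[OF Br, of e] unfolding eim .
        ultimately show ?thesis by blast
      qed
      then have "t j \<in> conv_hull C (Y - e ` A)" using B conv_mono[of "e ` B" "Y - e ` A" C]
        unfolding G_def by blast
      moreover have "t j \<in> conv_hull C (e ` A)" using A unfolding G_def by blast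
      moreover have "conv_hull C (e ` A) \<inter> conv_hull C (Y - e ` A) = {}"
        using shatters_D[OF sh eAY] .
      ultimately show False by blast
    qed
  next
    fix A assume Ar: "A \<subseteq> {..<r}" and cA: "card A = k"
    have eAY: "e ` A \<subseteq> Y" using image_mono[OF Ar, of e] unfolding eim .
    have ceA: "card (e ` A) = k" using cA inj_on_subset[OF einj Ar] by (simp add: card_image)
    have cin: "conv_hull C (e ` A) \<in> C" using conv_in[OF cs] eAY YX by blast
    have "Y \<inter> conv_hull C (e ` A) = e ` A" using conv_trace[OF sh eAY] by blast
    then have "measure M (conv_hull C (e ` A)) = real k / real r" using mu[OF cin] ceA by simp
    also have "\<dots> \<ge> \<epsilon>" using kge r by (simp add: field_simps)
    finally have "S \<inter> conv_hull C (e ` A) \<noteq> {}" using net cin unfolding weak_eps_net_def by blast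
    then obtain s where s: "s \<in> S" "s \<in> conv_hull C (e ` A)" by blast
    have "s \<in> t ` {0..<card S}" using t s(1) unfolding bij_betw_def by simp
    then obtain j where j: "j \<in> {0..<card S}" "s = t j" by (rule imageE) (rule that, simp_all)
    then have j: "j \<in> {0..<card S}" "t j = s" by simp_all
    then have "j < m" unfolding m_def by simp
    moreover have "A \<in> G j" unfolding G_def using Ar s j by simp
    ultimately show "\<exists>j<m. A \<in> G j" by blast
  qed
  then have "real r + 2 \<le> 2 * real k + real (card S)" unfolding m_def by linarith
  then show ?thesis using klt by (simp add: algebra_simps)
qed

theorem lemma2:
  fixes X :: "'a set" and C :: "'a set set" and \<epsilon> :: real and r :: nat
  assumes "convexity_space X C" and "\<epsilon> > 0" and "r > 0"
    and "radon_number X C > enat r"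
  shows "\<exists>M. prob_space M \<and> space M = X \<and> C \<subseteq> sets M \<and>
           (\<forall>S. S \<subseteq> X \<and> weak_eps_net C M \<epsilon> S \<longrightarrow>
                 infinite S \<or> real (card S) \<ge> (1 - 2 * \<epsilon>) * real r)"
proof -
  obtain Y where Y: "Y \<subseteq> X" "finite Y" "card Y = r" "radon_shatters C Y"
  proof (rule ccontr)
    assume "\<not> thesis"
    then have "\<not> (\<exists>Y. Y \<subseteq> X \<and> finite Y \<and> card Y = r \<and> radon_shatters C Y)" using that by blast
    then have "enat r \<in> {enat r | r. \<not> (\<exists>Y. Y \<subseteq> X \<and> finite Y \<and> card Y = r \<and> radon_shatters C Y)}"
      by blast
    then have "radon_number X C \<le> enat r" unfolding radon_number_def by (rule Inf_lower)
    then show False using assms(4) by simp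
  qed
  have Yne: "Y \<noteq> {}" using Y(3) assms(3) by auto
  define p where "p = pmf_of_set Y"
  define M where "M = restrict_space (measure_pmf p) X"
  have XS: "X \<inter> space (measure_pmf p) \<in> sets (measure_pmf p)" by simp
  have "emeasure (measure_pmf p) X = 1"
    unfolding p_def emeasure_pmf_of_set[OF Yne Y(2)] using Y(1,3) assms(3)
    by (simp add: Int_absorb2)
  then have ps: "prob_space M" unfolding M_def by (intro prob_space_restrict_space) simp_all
  have sp: "space M = X" unfolding M_def by (simp add: space_restrict_space)
  have sets: "C \<subseteq> sets M"
  proof
    fix c assume "c \<in> C"
    then have "c \<subseteq> X" using assms(1) unfolding convexity_space_def by blast
    then have e: "c = X \<inter> c" by blast
    show "c \<in> sets M" unfolding M_def sets_restrict_space sets_measure_pmf by (rule image_eqI[where x = c]) (rule e, rule UNIV_I)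
  qed
  have mu: "measure M c = real (card (Y \<inter> c)) / real r" if "c \<in> C" for c
  proof -
    have "c \<subseteq> X" using that assms(1) unfolding convexity_space_def by blast
    then have "measure M c = measure (measure_pmf p) c" unfolding M_def
      by (intro measure_restrict_space XS)
    also have "\<dots> = real (card (Y \<inter> c)) / real r"
      unfolding p_def measure_pmf_of_set[OF Yne Y(2)] Y(3) ..
    finally show ?thesis .
  qed
  show ?thesis
  proof (intro exI conjI allI impI)
    show "prob_space M" "space M = X" "C \<subseteq> sets M" using ps sp sets by auto
    fix S assume "S \<subseteq> X \<and> weak_eps_net C M \<epsilon> S"
    then have net: "weak_eps_net C M \<epsilon> S" by simp
    show "infinite S \<or> (1 - 2 * \<epsilon>) * real r \<le> real (card S)"
    proof (cases "finite S")
      case True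
      then show ?thesis using net_lower_bound[OF assms(1-3) Y mu net True] by simp
    qed simp
  qed
qed

end
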